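(* Let $K^T \ge 2$, let $\mathcal{D}^T$ be a probability distribution over pairs $(x,y)$ with $x$ in an input space $\mathcal{X}^T$ and $y$ a one-hot vector in $\{0,1\}^{K^T}$, and let $\ell(z,y) = -\sum_{j=1}^{K^T} y_j \log p_j(z)$ be the cross-entropy loss with softmax $p_j(z) = e^{z_j}/\sum_i e^{z_i}$. Let $z_S, z_L : \mathcal{X}^T \to \mathbb{R}^{K^T}$ be measurable logit maps of a service model and a local model before reprogramming, and $z^*_S(\cdot,\mathbf{Q}^* ), z^*_L(\cdot,\mathbf{P}^* ) : \mathcal{X}^T \to \mathbb{R}^{K^T}$ measurable logit maps of the two models after visual reprogramming with fixed prompts $\mathbf{Q}^*$, $\mathbf{P}^*$ respectively. Define the (finite) risks $\mathcal{R}_L(\mathcal{D}^T) = \mathbb{E}_{(x,y)\sim\mathcal{D}^T}[\ell(z_L(x),y)]$, $\mathcal{R}_S(\mathcal{D}^T) = \mathbb{E}[\ell(z_S(x),y)]$, $\mathcal{R}_L(\mathcal{D}^T,\mathbf{P}^* ) = \mathbb{E}[\ell(z^*_L(x,\mathbf{P}^* ),y)]$, $\mathcal{R}_S(\mathcal{D}^T,\mathbf{Q}^* ) = \mathbb{E}[\ell(z^*_S(x,\mathbf{Q}^* ),y)]$. Assume: (a) (service model superiority) $\mathcal{R}_S(\mathcal{D}^T) \le \mathcal{R}_L(\mathcal{D}^T)$ and $\mathcal{R}_S(\mathcal{D}^T,\mathbf{Q}^* ) \le \mathcal{R}_L(\mathcal{D}^T,\mathbf{P}^* )$; (b) ($\epsilon$-faithful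 priming) for some $\epsilon \ge 0$, $\mathbb{E}_{(x,y)\sim\mathcal{D}^T}[\|z_S(x) - z_L(x)\|_1] \le \epsilon$ and $\mathbb{E}_{(x,y)\sim\mathcal{D}^T}[\|z^*_S(x,\mathbf{Q}^* ) - z^*_L(x,\mathbf{P}^* )\|_1] \le \epsilon$. Then (1) $\mathcal{R}_L(\mathcal{D}^T) - \epsilon \le \mathcal{R}_S(\mathcal{D}^T) \le \mathcal{R}_L(\mathcal{D}^T)$, and (2) $\mathcal{R}_L(\mathcal{D}^T,\mathbf{P}^* ) - \epsilon \le \mathcal{R}_S(\mathcal{D}^T,\mathbf{Q}^* ) \le \mathcal{R}_L(\mathcal{D}^T,\mathbf{P}^* )$.
   Context: In the paper's setting, $z^*_S(x,\mathbf{Q}^* ) = \mathcal{F}_S(g_{\mathrm{in}}(x,\mathbf{Q}^* ))$ and $z^*_L(x,\mathbf{P}^* ) = \mathcal{F}_L(g_{\mathrm{in}}(x,\mathbf{P}^* ))$, where $g_{\mathrm{in}}$ is an input transformation and $\mathbf{Q}^*$, $\mathbf{P}^*$ are optimal visual prompts for the service model $\mathcal{F}_S$ and primed local model $\mathcal{F}_L$; for the statement these are simply fixed. $\|\cdot\|_1$ is the $L_1$ norm on $\mathbb{R}^{K^T}$. *)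

theory Defs
  imports "HOL-Probability.Probability"
begin

definition softmax :: "real ^ 'k \<Rightarrow> 'k \<Rightarrow> real" where
  "softmax z j = exp (z $ j) / (\<Sum>i\<in>UNIV. exp (z $ i))"

definition ce_loss :: "real ^ 'k \<Rightarrow> real ^ 'k \<Rightarrow> real" where
  "ce_loss z y = - (\<Sum>j\<in>UNIV. y $ j * ln (softmax z j))"

definition one_hot :: "(real ^ 'k) set" where
  "one_hot = {y. \<exists>c. \<forall>j. y $ j = (if j = c then 1 else 0)}"

definition l1norm :: "real ^ 'k \<Rightarrow> real" where
  "l1norm v = (\<Sum>i\<in>UNIV. \<bar>v $ i\<bar>)"

end

theory Submission
  imports Defs
begin

lemma ce_onehot:
  fixes z y :: "real ^ 'k"
  assumes "\<forall>j. y $ j = (if j = c then 1 else 0)"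
  shows "ce_loss z y = ln (\<Sum>i\<in>UNIV. exp (z $ i)) - z $ c"
proof -
  have pos: "(\<Sum>i\<in>UNIV. exp (z $ i)) > 0"
    by (rule sum_pos) auto
  have "ce_loss z y = - ln (softmax z c)"
  proof -
    have "(\<Sum>j\<in>UNIV. y $ j * ln (softmax z j)) = (\<Sum>j\<in>UNIV. (if j = c then ln (softmax z j) else 0))"
      using assms by (intro sum.cong) auto
    also have "\<dots> = ln (softmax z c)" by (simp add: sum.delta)
    finally show ?thesis unfolding ce_loss_def by simp
  qed
  also have "\<dots> = ln (\<Sum>i\<in>UNIV. exp (z $ i)) - z $ c"
    unfolding softmax_def using pos by (simp add: ln_div)
  finally show ?thesis .
qed

lemma lse_le:
  fixes a b :: "real ^ 'k"
  assumes "\<And>i. a $ i - b $ i \<le> M"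
  shows "ln (\<Sum>i\<in>UNIV. exp (a $ i)) - ln (\<Sum>i\<in>UNIV. exp (b $ i)) \<le> M"
proof -
  have posb: "(\<Sum>i\<in>UNIV. exp (b $ i)) > 0" by (rule sum_pos) auto
  have posa: "(\<Sum>i\<in>UNIV. exp (a $ i)) > 0" by (rule sum_pos) auto
  have "(\<Sum>i\<in>UNIV. exp (a $ i)) \<le> (\<Sum>i\<in>UNIV. exp M * exp (b $ i))"
  proof (rule sum_mono)
    fix i
    have "a $ i \<le> M + b $ i" using assms[of i] by simp
    then show "exp (a $ i) \<le> exp M * exp (b $ i)" by (simp add: exp_add[symmetric])
  qed
  also have "\<dots> = exp M * (\<Sum>i\<in>UNIV. exp (b $ i))" by (simp add: sum_distrib_left)
  finally have "ln (\<Sum>i\<in>UNIV. exp (a $ i)) \<le> ln (exp M * (\<Sum>i\<in>UNIV. exp (b $ i)))"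
    using posa by simp
  also have "\<dots> = M + ln (\<Sum>i\<in>UNIV. exp (b $ i))" using posb by (simp add: ln_mult)
  finally show ?thesis by simp
qed

lemma ce_diff_le:
  fixes a b y :: "real ^ 'k"
  assumes "y \<in> one_hot"
  shows "ce_loss a y - ce_loss b y \<le> l1norm (b - a)"
proof -
  obtain c where c: "\<forall>j. y $ j = (if j = c then 1 else 0)" using assms unfolding one_hot_def by auto
  define d where "d i = a $ i - b $ i" for i
  obtain m where m: "\<And>i. d i \<le> d m"
  proof -
    have "Max (range d) \<in> range d" by (rule Max_in) auto
    then obtain m where "d m = Max (range d)" by (metis rangeE)
    moreover have "\<And>i. d i \<le> Max (range d)" by (rule Max_ge) auto
    ultimately show ?thesis using that by metis
  qed
  have "ce_loss a y - ce_loss b y \<le> d m - d c"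
  proof -
    have "ln (\<Sum>i\<in>UNIV. exp (a $ i)) - ln (\<Sum>i\<in>UNIV. exp (b $ i)) \<le> d m"
      by (rule lse_le) (use m in \<open>simp add: d_def\<close>)
    then show ?thesis unfolding ce_onehot[OF c] d_def by simp
  qed
  also have "\<dots> \<le> l1norm (b - a)"
  proof (cases "m = c")
    case True
    then show ?thesis unfolding l1norm_def by (simp add: sum_nonneg)
  next
    case False
    have "d m - d c \<le> \<bar>(b-a) $ m\<bar> + \<bar>(b-a) $ c\<bar>" unfolding d_def by simp
    also have "\<dots> = (\<Sum>i\<in>{m,c}. \<bar>(b-a) $ i\<bar>)" using False by simp
    also have "\<dots> \<le> l1norm (b - a)" unfolding l1norm_def
      by (rule sum_mono2) auto
    finally show ?thesis .
  qed
  finally show ?thesis .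
qed

lemma main_bound:
  fixes D :: "('x \<times> (real ^ 'k)) measure" and f g :: "'x \<Rightarrow> real ^ 'k"
  assumes probD: "prob_space D"
    and onehot: "AE xy in D. snd xy \<in> one_hot"
    and iL: "integrable D (\<lambda>(x, y). ce_loss (f x) y)"
    and iS: "integrable D (\<lambda>(x, y). ce_loss (g x) y)"
    and eps: "\<epsilon> \<ge> 0"
    and faith: "(\<integral>\<^sup>+(x, y). ennreal (l1norm (g x - f x)) \<partial>D) \<le> ennreal \<epsilon>"
  shows "(\<integral>(x, y). ce_loss (f x) y \<partial>D) - \<epsilon> \<le> (\<integral>(x, y). ce_loss (g x) y \<partial>D)"
proof -
  define F where "F = (\<lambda>(x, y). ce_loss (f x) y)"
  define G where "G = (\<lambda>(x, y). ce_loss (g x) y)"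
  define h where "h xy = max 0 (F xy - G xy)" for xy
  have iF: "integrable D F" using iL by (simp add: F_def)
  have iG: "integrable D G" using iS by (simp add: G_def)
  have idf: "integrable D (\<lambda>xy. F xy - G xy)" by (rule Bochner_Integration.integrable_diff[OF iF iG])
  have ih: "integrable D h" unfolding h_def
    by (rule integrable_max[OF _ idf]) simp
  have "(\<integral>(x, y). ce_loss (f x) y \<partial>D) - (\<integral>(x, y). ce_loss (g x) y \<partial>D)
        = (\<integral>xy. F xy \<partial>D) - (\<integral>xy. G xy \<partial>D)" by (simp add: F_def G_def)
  also have "\<dots> = (\<integral>xy. F xy - G xy \<partial>D)"
    by (rule Bochner_Integration.integral_diff[OF iF iG, symmetric])
  also have "\<dots> \<le> integral\<^sup>L D h"
    by (rule integral_mono[OF idf ih]) (simp add: h_def)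
  also have "integral\<^sup>L D h = enn2real (\<integral>\<^sup>+xy. ennreal (h xy) \<partial>D)"
    using ih by (subst nn_integral_eq_integral) (auto simp: h_def)
  also have "\<dots> \<le> \<epsilon>"
  proof -
    have "(\<integral>\<^sup>+xy. ennreal (h xy) \<partial>D) \<le> (\<integral>\<^sup>+(x, y). ennreal (l1norm (g x - f x)) \<partial>D)"
    proof (rule nn_integral_mono_AE)
      show "AE xy in D. ennreal (h xy) \<le> (case xy of (x, y) \<Rightarrow> ennreal (l1norm (g x - f x)))"
        using onehot
      proof eventually_elim
        case (elim xy)
        obtain x y where xy: "xy = (x, y)" by fastforce
        have "0 \<le> l1norm (g x - f x)" unfolding l1norm_def by (simp add: sum_nonneg)
        then show ?case using ce_diff_le[of y "f x" "g x"] elim unfolding h_def xy F_def G_def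
          by (auto intro: ennreal_leI)
      qed
    qed
    also have "\<dots> \<le> ennreal \<epsilon>" by (rule faith)
    finally have le: "(\<integral>\<^sup>+xy. ennreal (h xy) \<partial>D) \<le> ennreal \<epsilon>" .
    then show ?thesis using eps
      by (metis enn2real_ennreal enn2real_mono ennreal_less_top)
  qed
  finally show ?thesis by simp
qed



theorem theorem1:
  fixes MX :: "'x measure"
    and D :: "('x \<times> (real ^ 'k)) measure"
    and zS zL :: "'x \<Rightarrow> real ^ 'k"
    and zSs :: "'x \<Rightarrow> 'q \<Rightarrow> real ^ 'k"
    and zLs :: "'x \<Rightarrow> 'p \<Rightarrow> real ^ 'k"
    and Q :: 'q and P :: 'p and \<epsilon> :: real
  assumes K2: "CARD('k) \<ge> 2"
    and probD: "prob_space D"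
    and setsD: "sets D = sets (MX \<Otimes>\<^sub>M (borel :: (real ^ 'k) measure))"
    and onehot: "AE xy in D. snd xy \<in> one_hot"
    and mS: "zS \<in> borel_measurable MX" and mL: "zL \<in> borel_measurable MX"
    and mSs: "(\<lambda>x. zSs x Q) \<in> borel_measurable MX"
    and mLs: "(\<lambda>x. zLs x P) \<in> borel_measurable MX"
    and iL: "integrable D (\<lambda>(x, y). ce_loss (zL x) y)"
    and iS: "integrable D (\<lambda>(x, y). ce_loss (zS x) y)"
    and iLs: "integrable D (\<lambda>(x, y). ce_loss (zLs x P) y)"
    and iSs: "integrable D (\<lambda>(x, y). ce_loss (zSs x Q) y)"
    and supA: "(\<integral>(x, y). ce_loss (zS x) y \<partial>D) \<le> (\<integral>(x, y). ce_loss (zL x) y \<partial>D)"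
    and supB: "(\<integral>(x, y). ce_loss (zSs x Q) y \<partial>D) \<le> (\<integral>(x, y). ce_loss (zLs x P) y \<partial>D)"
    and eps: "\<epsilon> \<ge> 0"
    and faithA: "(\<integral>\<^sup>+(x, y). ennreal (l1norm (zS x - zL x)) \<partial>D) \<le> ennreal \<epsilon>"
    and faithB: "(\<integral>\<^sup>+(x, y). ennreal (l1norm (zSs x Q - zLs x P)) \<partial>D) \<le> ennreal \<epsilon>"
  shows "(\<integral>(x, y). ce_loss (zL x) y \<partial>D) - \<epsilon> \<le> (\<integral>(x, y). ce_loss (zS x) y \<partial>D)
         \<and> (\<integral>(x, y). ce_loss (zS x) y \<partial>D) \<le> (\<integral>(x, y). ce_loss (zL x) y \<partial>D)
         \<and> (\<integral>(x, y). ce_loss (zLs x P) y \<partial>D) - \<epsilon> \<le> (\<integral>(x, y). ce_loss (zSs x Q) y \<partial>D)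
         \<and> (\<integral>(x, y). ce_loss (zSs x Q) y \<partial>D) \<le> (\<integral>(x, y). ce_loss (zLs x P) y \<partial>D)"
proof -
  have A: "(\<integral>(x, y). ce_loss (zL x) y \<partial>D) - \<epsilon> \<le> (\<integral>(x, y). ce_loss (zS x) y \<partial>D)"
    by (rule main_bound[OF probD onehot iL iS eps faithA])
  have B: "(\<integral>(x, y). ce_loss (zLs x P) y \<partial>D) - \<epsilon> \<le> (\<integral>(x, y). ce_loss (zSs x Q) y \<partial>D)"
    by (rule main_bound[where f="\<lambda>x. zLs x P" and g="\<lambda>x. zSs x Q", OF probD onehot iLs iSs eps faithB])
  show ?thesis using A B supA supB by blast
qed

end
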